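(* Let $\gamma\in\Gamma$ and $n,n'\in\mathbb{N}_+$. Then $\max\{\mathcal{H}_{n'}(\mathcal{S}_h):h\in\mathrm{RL}(n,n')\}\preceq\gamma_{\min(n',n),n'}$.
   Context: $\sigma(x)=\max(0,x)$; $\mathrm{RL}(n,n')$ ($n,n'\in\mathbb{N}_+$) is the set of maps $h:\mathbb{R}^n\to\mathbb{R}^{n'}$, $h(x)_i=\sigma(\langle x,w_i\rangle+b_i)$ for some $W\in\mathbb{R}^{n'\times n}$ with rows $w_i$, $b\in\mathbb{R}^{n'}$; convention: $\mathrm{RL}(0,n')$ are constant maps $\{0\}\to\mathbb{R}^{n'}$ with $\mathcal{H}_{n'}(\mathcal{S}_h)={\rm e}_0$. $S_h(x)_i=1$ iff $\langle x,w_i\rangle+b_i>0$ else $0$; $\mathcal{S}_h=\{S_h(x):x\in\mathbb{R}^n\}$; $|s|=\sum_is_i$. $V$: sequences $(v_j)_{j\in\mathbb{N}}$ of nonnegative integers with finite sum; ${\rm e}_i$ has $({\rm e}_i)_j=\delta_{ij}$; $v\preceq w$ iff $\sum_{j\ge J}v_j\le\sum_{j\ge J}w_j$ for all $J\in\mathbb{N}$; for a finite family, $\max_i(v^{(i)})_J=\max_i\sum_{j\ge J}v^{(i)}_j-\max_i\sum_{j\ge J+1}v^{(i)}_j$. $\mathcal{H}_{n'}(\mathcal{S})=(|\{s\in\mathcal{S}:|s|=j\}|)_j$. $\Gamma$: families $(\gamma_{n,n'})_{n'\in\mathbb{N}_+,n\in\{0,\dots,n'\}}$ in $V$ with (i)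 $\max\{\mathcal{H}_{n'}(\mathcal{S}_h):h\in\mathrm{RL}(n,n')\}\preceq\gamma_{n,n'}$ for all $n'\in\mathbb{N}_+$, $n\in\{0,\dots,n'\}$, (ii) $n\le\tilde n\le n'\Rightarrow\gamma_{n,n'}\preceq\gamma_{\tilde n,n'}$. *)

theory Defs
  imports Complex_Main
begin

text \<open>Elements of V: sequences of nonnegative integers indexed by nat with finite sum
  (equivalently, finite support).\<close>
definition inV :: "(nat \<Rightarrow> nat) \<Rightarrow> bool" where
  "inV v \<longleftrightarrow> finite {j. v j \<noteq> 0}"

definition unitV :: "nat \<Rightarrow> (nat \<Rightarrow> nat)" where
  "unitV i = (\<lambda>j. if j = i then 1 else 0)"

definition tailV :: "(nat \<Rightarrow> nat) \<Rightarrow> nat \<Rightarrow> nat" where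
  "tailV v J = (\<Sum>j\<in>{j. J \<le> j \<and> v j \<noteq> 0}. v j)"

definition precV :: "(nat \<Rightarrow> nat) \<Rightarrow> (nat \<Rightarrow> nat) \<Rightarrow> bool" where
  "precV v w \<longleftrightarrow> (\<forall>J. tailV v J \<le> tailV w J)"

text \<open>Maximum of a finite (nonempty) family of elements of V.\<close>
definition maxV :: "(nat \<Rightarrow> nat) set \<Rightarrow> (nat \<Rightarrow> nat)" where
  "maxV A = (\<lambda>J. Max ((\<lambda>v. tailV v J) ` A) - Max ((\<lambda>v. tailV v (Suc J)) ` A))"

definition actPattern :: "nat \<Rightarrow> nat \<Rightarrow> (nat \<Rightarrow> nat \<Rightarrow> real) \<Rightarrow> (nat \<Rightarrow> real) \<Rightarrow> (nat \<Rightarrow> real) \<Rightarrow> (nat \<Rightarrow> nat)" where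
  "actPattern n n' W b x = (\<lambda>i. if i < n' \<and> (\<Sum>k<n. W i k * x k) + b i > 0 then 1 else 0)"

definition actPatterns :: "nat \<Rightarrow> nat \<Rightarrow> (nat \<Rightarrow> nat \<Rightarrow> real) \<Rightarrow> (nat \<Rightarrow> real) \<Rightarrow> (nat \<Rightarrow> nat) set" where
  "actPatterns n n' W b = {actPattern n n' W b x | x. \<forall>k. n \<le> k \<longrightarrow> x k = 0}"

definition patSize :: "nat \<Rightarrow> (nat \<Rightarrow> nat) \<Rightarrow> nat" where
  "patSize n' s = (\<Sum>i<n'. s i)"

definition histH :: "nat \<Rightarrow> (nat \<Rightarrow> nat) set \<Rightarrow> (nat \<Rightarrow> nat)" where
  "histH n' S = (\<lambda>j. card {s\<in>S. patSize n' s = j})"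

definition RLhists :: "nat \<Rightarrow> nat \<Rightarrow> (nat \<Rightarrow> nat) set" where
  "RLhists n n' = (if n = 0 then {unitV 0}
     else {histH n' (actPatterns n n' W b) | W b. True})"

definition GammaSet :: "(nat \<Rightarrow> nat \<Rightarrow> (nat \<Rightarrow> nat)) set" where
  "GammaSet = {\<gamma>. (\<forall>n'\<ge>1. \<forall>n\<le>n'. inV (\<gamma> n n'))
     \<and> (\<forall>n'\<ge>1. \<forall>n\<le>n'. precV (maxV (RLhists n n')) (\<gamma> n n'))
     \<and> (\<forall>n'\<ge>1. \<forall>n m. n \<le> m \<and> m \<le> n' \<longrightarrow> precV (\<gamma> n n') (\<gamma> m n'))}"

end

theory Submission imports Defs "HOL-Combinatorics.Transposition" begin

lemma dep:
  fixes v :: "nat \<Rightarrow> nat \<Rightarrow> real"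
  shows "finite K \<Longrightarrow> n' < card K \<Longrightarrow> \<exists>c. (\<exists>k\<in>K. c k \<noteq> 0) \<and> (\<forall>i<n'. (\<Sum>k\<in>K. c k * v k i) = 0)"
proof (induction n' arbitrary: K v)
  case 0
  then obtain k where "k \<in> K" by (metis card.empty ex_in_conv less_nat_zero_code)
  then show ?case by (rule_tac x="\<lambda>_. 1" in exI) auto
next
  case (Suc n K v)
  show ?case
  proof (cases "\<forall>k\<in>K. v k n = 0")
    case True
    from Suc.IH[of K v] Suc.prems obtain c where c: "\<exists>k\<in>K. c k \<noteq> 0" "\<forall>i<n. (\<Sum>k\<in>K. c k * v k i) = 0" by auto
    have "\<forall>i<Suc n. (\<Sum>k\<in>K. c k * v k i) = 0"
      using c True by (auto simp: less_Suc_eq)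
    then show ?thesis using c by blast
  next
    case False
    then obtain p where p: "p \<in> K" "v p n \<noteq> 0" by auto
    define K' where "K' = K - {p}"
    define u where "u k i = v k i - (v k n / v p n) * v p i" for k i
    have fK': "finite K'" using Suc.prems K'_def by auto
    have cK': "n < card K'" using Suc.prems p K'_def by auto
    from Suc.IH[OF fK' cK', of u] obtain c' where c': "\<exists>k\<in>K'. c' k \<noteq> 0" "\<forall>i<n. (\<Sum>k\<in>K'. c' k * u k i) = 0" by auto
    define c where "c k = (if k = p then - (\<Sum>k\<in>K'. c' k * v k n) / v p n else c' k)" for k
    have Ksplit: "(\<Sum>k\<in>K. c k * v k i) = c p * v p i + (\<Sum>k\<in>K'. c' k * v k i)" for i
    proof -
      have "(\<Sum>k\<in>K. c k * v k i) = c p * v p i + (\<Sum>k\<in>K'. c k * v k i)"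
        using p Suc.prems(1) K'_def by (simp add: sum.remove)
      moreover have "(\<Sum>k\<in>K'. c k * v k i) = (\<Sum>k\<in>K'. c' k * v k i)"
        by (rule sum.cong) (auto simp: c_def K'_def)
      ultimately show ?thesis by simp
    qed
    have "\<forall>i<Suc n. (\<Sum>k\<in>K. c k * v k i) = 0"
    proof (intro allI impI)
      fix i assume i: "i < Suc n"
      show "(\<Sum>k\<in>K. c k * v k i) = 0"
      proof (cases "i = n")
        case True
        then show ?thesis using p(2) by (simp only: Ksplit) (simp add: c_def)
      next
        case False
        with i have "i < n" by simp
        with c' have "(\<Sum>k\<in>K'. c' k * u k i) = 0" by auto
        moreover have "(\<Sum>k\<in>K'. c' k * u k i) = (\<Sum>k\<in>K'. c' k * v k i) - (\<Sum>k\<in>K'. c' k * v k n) / v p n * v p i"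
          by (simp add: u_def algebra_simps sum_subtractf sum_distrib_left sum_divide_distrib sum_distrib_right)
        ultimately show ?thesis by (simp only: Ksplit) (simp add: c_def)
      qed
    qed
    moreover have "\<exists>k\<in>K. c k \<noteq> 0" using c' K'_def c_def by auto
    ultimately show ?thesis by blast
  qed
qed

definition imgs :: "nat \<Rightarrow> nat \<Rightarrow> (nat \<Rightarrow> nat \<Rightarrow> real) \<Rightarrow> (nat \<Rightarrow> real) set" where
  "imgs m n' W = {(\<lambda>i. if i < n' then (\<Sum>k<m. W i k * x k) else 0) | x. True}"

lemma act_sub:
  assumes "imgs m n' W = imgs m' n' W'"
  shows "actPatterns m n' W b \<subseteq> actPatterns m' n' W' b"
proof
  fix s assume "s \<in> actPatterns m n' W b"
  then obtain x where s: "s = actPattern m n' W b x" unfolding actPatterns_def by auto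
  have "(\<lambda>i. if i < n' then (\<Sum>k<m. W i k * x k) else 0) \<in> imgs m' n' W'"
    using assms unfolding imgs_def by blast
  then obtain y where y: "(\<lambda>i. if i < n' then (\<Sum>k<m. W i k * x k) else 0) = (\<lambda>i. if i < n' then (\<Sum>k<m'. W' i k * y k) else 0)"
    unfolding imgs_def by auto
  define y' where "y' k = (if k < m' then y k else 0)" for k
  have e: "(\<Sum>k<m'. W' i k * y' k) = (\<Sum>k<m. W i k * x k)" if "i < n'" for i
  proof -
    have "(\<Sum>k<m'. W' i k * y' k) = (\<Sum>k<m'. W' i k * y k)" by (rule sum.cong) (auto simp: y'_def)
    also have "\<dots> = (\<Sum>k<m. W i k * x k)" using fun_cong[OF y, of i] that by simp
    finally show ?thesis .
  qed
  have "s = actPattern m' n' W' b y'" unfolding s actPattern_def using e by (auto intro!: ext)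
  moreover have "\<forall>k. m' \<le> k \<longrightarrow> y' k = 0" by (auto simp: y'_def)
  ultimately show "s \<in> actPatterns m' n' W' b" unfolding actPatterns_def by blast
qed

lemma swap_sub:
  assumes "p < m" "q < m"
  shows "imgs m n' (\<lambda>i k. W i (transpose p q k)) \<subseteq> imgs m n' W"
proof
  let ?s = "transpose p q"
  have bij: "bij_betw ?s {..<m} {..<m}"
    using assms by simp
  fix f assume "f \<in> imgs m n' (\<lambda>i k. W i (?s k))"
  then obtain x where f: "f = (\<lambda>i. if i < n' then (\<Sum>k<m. W i (?s k) * x k) else 0)" unfolding imgs_def by auto
  have E: "(\<Sum>k<m. W i (?s k) * x k) = (\<Sum>k<m. W i k * x (?s k))" for i
    using sum.reindex_bij_betw[OF bij, of "\<lambda>k. W i k * x (?s k)"] by simp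
  have "f = (\<lambda>i. if i < n' then (\<Sum>k<m. W i k * (x \<circ> ?s) k) else 0)" unfolding f o_def E ..
  then show "f \<in> imgs m n' W" unfolding imgs_def by blast
qed

lemma swap_eq:
  assumes "p < m" "q < m"
  shows "imgs m n' (\<lambda>i k. W i (transpose p q k)) = imgs m n' W"
proof
  show "imgs m n' (\<lambda>i k. W i (transpose p q k)) \<subseteq> imgs m n' W" by (rule swap_sub[OF assms])
  show "imgs m n' W \<subseteq> imgs m n' (\<lambda>i k. W i (transpose p q k))"
    using swap_sub[OF assms, of n' "\<lambda>i k. W i (transpose p q k)"] by simp
qed

lemma drop_eq:
  assumes "\<forall>i<n'. W i m = (\<Sum>k<m. d k * W i k)"
  shows "imgs (Suc m) n' W = imgs m n' W"
proof
  show "imgs (Suc m) n' W \<subseteq> imgs m n' W"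
  proof
    fix f assume "f \<in> imgs (Suc m) n' W"
    then obtain x where f: "f = (\<lambda>i. if i < n' then (\<Sum>k<Suc m. W i k * x k) else 0)" unfolding imgs_def by auto
    have "(\<Sum>k<Suc m. W i k * x k) = (\<Sum>k<m. W i k * (x k + x m * d k))" if "i < n'" for i
      using assms that by (simp add: algebra_simps sum.distrib sum_distrib_left sum_distrib_right)
    then have "f = (\<lambda>i. if i < n' then (\<Sum>k<m. W i k * (\<lambda>k. x k + x m * d k) k) else 0)"
      unfolding f by (auto intro!: ext)
    then show "f \<in> imgs m n' W" unfolding imgs_def by (auto intro!: exI[of _ "\<lambda>k. x k + x m * d k"])
  qed
  show "imgs m n' W \<subseteq> imgs (Suc m) n' W"
  proof
    fix f assume "f \<in> imgs m n' W"
    then obtain x where f: "f = (\<lambda>i. if i < n' then (\<Sum>k<m. W i k * x k) else 0)" unfolding imgs_def by auto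
    have "(\<Sum>k<Suc m. W i k * (x(m:=0)) k) = (\<Sum>k<m. W i k * x k)" for i
      by simp
    then have "f = (\<lambda>i. if i < n' then (\<Sum>k<Suc m. W i k * (x(m:=0)) k) else 0)"
      unfolding f by (auto intro!: ext)
    then show "f \<in> imgs (Suc m) n' W" unfolding imgs_def by blast
  qed
qed

lemma reduce: "n' \<le> m \<Longrightarrow> \<exists>W'. imgs m n' W = imgs n' n' W'"
proof (induction m arbitrary: W)
  case 0
  then show ?case by auto
next
  case (Suc m W)
  show ?case
  proof (cases "n' = Suc m")
    case True then show ?thesis by auto
  next
    case False
    with Suc.prems have le: "n' \<le> m" by simp
    obtain c where c: "\<exists>k\<in>{..<Suc m}. c k \<noteq> 0" "\<forall>i<n'. (\<Sum>k\<in>{..<Suc m}. c k * W i k) = 0"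
      using dep[of "{..<Suc m}" n' "\<lambda>k i. W i k"] le by auto
    then obtain p where p: "p < Suc m" "c p \<noteq> 0" by auto
    let ?s = "transpose p m"
    define W2 where "W2 i k = W i (?s k)" for i k
    have bij: "bij_betw ?s {..<Suc m} {..<Suc m}"
      using p by simp
    have e1: "imgs (Suc m) n' W2 = imgs (Suc m) n' W"
      unfolding W2_def using swap_eq[of p "Suc m" m] p by simp
    have col: "W2 i m = (\<Sum>k<m. (- c (?s k) / c p) * W2 i k)" if i: "i < n'" for i
    proof -
      have "0 = (\<Sum>k<Suc m. c k * W i k)" using c i by simp
      also have "\<dots> = (\<Sum>k<Suc m. c (?s k) * W2 i k)"
        using sum.reindex_bij_betw[OF bij, of "\<lambda>k. c k * W i k"] by (simp add: W2_def)
      also have "\<dots> = (\<Sum>k<m. c (?s k) * W2 i k) + c p * W2 i m" by simp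
      finally have "c p * W2 i m = - (\<Sum>k<m. c (?s k) * W2 i k)" by linarith
      then have "W2 i m = - (\<Sum>k<m. c (?s k) * W2 i k) / c p" using p(2)
        by (simp add: field_simps)
      also have "\<dots> = (\<Sum>k<m. (- c (?s k) / c p) * W2 i k)"
        by (simp add: sum_divide_distrib sum_negf[symmetric])
      finally show ?thesis .
    qed
    have "imgs (Suc m) n' W2 = imgs m n' W2"
      by (rule drop_eq[where d="\<lambda>k. - c (?s k) / c p"]) (use col in auto)
    moreover obtain W' where "imgs m n' W2 = imgs n' n' W'" using Suc.IH le by blast
    ultimately show ?thesis using e1 by auto
  qed
qed

lemma RL_eq:
  assumes "n' < n" "1 \<le> n'"
  shows "RLhists n n' = RLhists n' n'"
proof
  show "RLhists n n' \<subseteq> RLhists n' n'"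
  proof
    fix h assume "h \<in> RLhists n n'"
    then obtain W b where h: "h = histH n' (actPatterns n n' W b)"
      using assms unfolding RLhists_def by auto
    obtain W' where "imgs n n' W = imgs n' n' W'" using reduce[of n' n W] assms by auto
    then have "actPatterns n n' W b = actPatterns n' n' W' b"
      using act_sub by (metis subset_antisym)
    then show "h \<in> RLhists n' n'" using h assms unfolding RLhists_def by auto
  qed
  show "RLhists n' n' \<subseteq> RLhists n n'"
  proof
    fix h assume "h \<in> RLhists n' n'"
    then obtain W b where h: "h = histH n' (actPatterns n' n' W b)"
      using assms unfolding RLhists_def by auto
    define W' where "W' i k = (if k < n' then W i k else 0)" for i k
    have S: "(\<Sum>k<n. W' i k * x k) = (\<Sum>k<n'. W i k * x k)" for i x
    proof -
      have "(\<Sum>k<n. W' i k * x k) = (\<Sum>k<n'. W' i k * x k)"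
        by (rule sum.mono_neutral_right) (use assms in \<open>auto simp: W'_def\<close>)
      also have "\<dots> = (\<Sum>k<n'. W i k * x k)" by (rule sum.cong) (auto simp: W'_def)
      finally show ?thesis .
    qed
    have "imgs n n' W' = imgs n' n' W" unfolding imgs_def S ..
    then have "actPatterns n n' W' b = actPatterns n' n' W b"
      using act_sub by (metis subset_antisym)
    then have "h = histH n' (actPatterns n n' W' b)" using h by simp
    then show "h \<in> RLhists n n'" using assms unfolding RLhists_def by auto
  qed
qed

theorem mainTheorem5:
  fixes \<gamma> :: "nat \<Rightarrow> nat \<Rightarrow> (nat \<Rightarrow> nat)" and n n' :: nat
  assumes "\<gamma> \<in> GammaSet" and "1 \<le> n" and "1 \<le> n'"
  shows "precV (maxV (RLhists n n')) (\<gamma> (min n' n) n')"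
proof (cases "n \<le> n'")
  case True
  then show ?thesis using assms unfolding GammaSet_def by (simp add: min_def)
next
  case False
  then have "RLhists n n' = RLhists n' n'" using RL_eq assms by simp
  then show ?thesis using assms False unfolding GammaSet_def by (simp add: min_def)
qed

end
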